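(* Let $\mathcal{A}\subseteq\mathbb{R}^3$, $K\ge2$, $P_1,\ldots,P_K>0$, $\sigma^2>0$, and $h_1,\ldots,h_K\in L^2(\mathcal{A})$ with positive definite Gram matrix $\mathbf{R}$, $r_{k_1,k_2}=[\mathbf{R}]_{k_1,k_2}=\int_{\mathcal{A}}h_{k_1}^{*}h_{k_2}\,\mathrm{d}\mathbf{r}$. For a nonzero $w_k\in L^2(\mathcal{A})$ define the SINR $$\gamma_k(w_k)=\frac{\frac{P_k}{\sigma^2}\left|\int_{\mathcal{A}}w_k^{*}h_k\,\mathrm{d}\mathbf{r}\right|^2}{\sum_{k'\neq k}\frac{P_{k'}}{\sigma^2}\left|\int_{\mathcal{A}}w_k^{*}h_{k'}\,\mathrm{d}\mathbf{r}\right|^2+\int_{\mathcal{A}}|w_k|^2\,\mathrm{d}\mathbf{r}}$$ and the rate $\mathcal{R}_k=\log_2(1+\gamma_k)$. Fix $k$, let $\mathbf{h}_{\setminus k}(\mathbf{r})=[h_{k'}(\mathbf{r})]_{k'\neq k}\in\mathbb{C}^{1\times(K-1)}$, $\mathbf{R}_k$ the matrix $\mathbf{R}$ with row and column $k$ removed, $\mathbf{r}_{k,k}=[r_{k',k}]_{k'\neq k}\in\mathbb{C}^{(K-1)\times1}$, $\mathbf{P}_k=\mathrm{diag}(P_{k'}/\sigma^2)_{k'\neq k}$, $\mathbf{C}_k=\mathbf{P}_k^{1/2}\mathbf{R}_k\mathbf{P}_k^{1/2}$, and $\overline{\mathbf{C}}_k=(\mathbf{I}_{K-1}+\mathbf{C}_k)^{-1}$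 with entries $\overline{c}_{k_1,k_2}$ ($k_1,k_2\neq k$). Then the beamformer $$w_{\mathsf{MMSE},k}(\mathbf{r})=h_k(\mathbf{r})-\sum_{k_1\neq k}\sum_{k_2\neq k}\overline{c}_{k_1,k_2}\frac{\sqrt{P_{k_1}P_{k_2}}}{\sigma^2}h_{k_1}(\mathbf{r})r_{k_2,k}=h_k(\mathbf{r})-\mathbf{h}_{\setminus k}(\mathbf{r})(\mathbf{P}_k^{-1}+\mathbf{R}_k)^{-1}\mathbf{r}_{k,k}$$ maximizes $\gamma_k(w_k)$ (equivalently the per-user rate $\mathcal{R}_k$) over all nonzero $w_k\in L^2(\mathcal{A})$.
   Context: Standing assumption: channel responses pairwise non-parallel and $\mathbf{R}$ positive definite. *)

theory Defs
  imports "HOL-Analysis.Analysis"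
begin

definition L2 :: "(real^3) set \<Rightarrow> (real^3 \<Rightarrow> complex) \<Rightarrow> bool" where
  "L2 A f \<longleftrightarrow> f \<in> borel_measurable (lebesgue_on A) \<and>
                integrable (lebesgue_on A) (\<lambda>r. (cmod (f r))\<^sup>2)"

definition ip :: "(real^3) set \<Rightarrow> (real^3 \<Rightarrow> complex) \<Rightarrow> (real^3 \<Rightarrow> complex) \<Rightarrow> complex" where
  "ip A f g = integral\<^sup>L (lebesgue_on A) (\<lambda>r. cnj (f r) * g r)"

text \<open>Gram matrix entries r_{k1,k2} = int_A cnj(h_k1) h_k2 dr (users indexed 0..<K).\<close>

definition gram :: "(real^3) set \<Rightarrow> (nat \<Rightarrow> real^3 \<Rightarrow> complex) \<Rightarrow> nat \<Rightarrow> nat \<Rightarrow> complex" where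
  "gram A h k1 k2 = ip A (h k1) (h k2)"

definition pos_def_mat :: "nat \<Rightarrow> (nat \<Rightarrow> nat \<Rightarrow> complex) \<Rightarrow> bool" where
  "pos_def_mat K M \<longleftrightarrow> (\<forall>i<K. \<forall>j<K. M j i = cnj (M i j)) \<and>
     (\<forall>x :: nat \<Rightarrow> complex. (\<exists>i<K. x i \<noteq> 0) \<longrightarrow>
        (\<Sum>i<K. \<Sum>j<K. cnj (x i) * M i j * x j) \<in> \<real> \<and>
        Re (\<Sum>i<K. \<Sum>j<K. cnj (x i) * M i j * x j) > 0)"

definition mat_inv_on :: "nat set \<Rightarrow> (nat \<Rightarrow> nat \<Rightarrow> complex) \<Rightarrow> (nat \<Rightarrow> nat \<Rightarrow> complex)" where
  "mat_inv_on S M = (THE B. (\<forall>i\<in>S. \<forall>l\<in>S. (\<Sum>j\<in>S. M i j * B j l) = (if i = l then 1 else 0))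
                        \<and> (\<forall>i l. i \<notin> S \<or> l \<notin> S \<longrightarrow> B i l = 0))"

definition sinr :: "(real^3) set \<Rightarrow> nat \<Rightarrow> (nat \<Rightarrow> real) \<Rightarrow> real \<Rightarrow> (nat \<Rightarrow> real^3 \<Rightarrow> complex)
                     \<Rightarrow> nat \<Rightarrow> (real^3 \<Rightarrow> complex) \<Rightarrow> real" where
  "sinr A K P \<sigma>2 h k w =
     (P k / \<sigma>2) * (cmod (ip A w (h k)))\<^sup>2 /
     ((\<Sum>k'\<in>{0..<K} - {k}. (P k' / \<sigma>2) * (cmod (ip A w (h k')))\<^sup>2)
       + integral\<^sup>L (lebesgue_on A) (\<lambda>r. (cmod (w r))\<^sup>2))"

definition rate :: "(real^3) set \<Rightarrow> nat \<Rightarrow> (nat \<Rightarrow> real) \<Rightarrow> real \<Rightarrow> (nat \<Rightarrow> real^3 \<Rightarrow> complex)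
                     \<Rightarrow> nat \<Rightarrow> (real^3 \<Rightarrow> complex) \<Rightarrow> real" where
  "rate A K P \<sigma>2 h k w = log 2 (1 + sinr A K P \<sigma>2 h k w)"

definition C_mat :: "(real^3) set \<Rightarrow> nat \<Rightarrow> (nat \<Rightarrow> real) \<Rightarrow> real \<Rightarrow> (nat \<Rightarrow> real^3 \<Rightarrow> complex)
                     \<Rightarrow> nat \<Rightarrow> nat \<Rightarrow> nat \<Rightarrow> complex" where
  "C_mat A K P \<sigma>2 h k k1 k2 =
     complex_of_real (sqrt (P k1 / \<sigma>2)) * gram A h k1 k2 * complex_of_real (sqrt (P k2 / \<sigma>2))"

definition Cbar_mat :: "(real^3) set \<Rightarrow> nat \<Rightarrow> (nat \<Rightarrow> real) \<Rightarrow> real \<Rightarrow> (nat \<Rightarrow> real^3 \<Rightarrow> complex)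
                     \<Rightarrow> nat \<Rightarrow> nat \<Rightarrow> nat \<Rightarrow> complex" where
  "Cbar_mat A K P \<sigma>2 h k = mat_inv_on ({0..<K} - {k})
     (\<lambda>i j. (if i = j then 1 else 0) + C_mat A K P \<sigma>2 h k i j)"

definition w_mmse :: "(real^3) set \<Rightarrow> nat \<Rightarrow> (nat \<Rightarrow> real) \<Rightarrow> real \<Rightarrow> (nat \<Rightarrow> real^3 \<Rightarrow> complex)
                     \<Rightarrow> nat \<Rightarrow> real^3 \<Rightarrow> complex" where
  "w_mmse A K P \<sigma>2 h k r =
     h k r - (\<Sum>k1\<in>{0..<K} - {k}. \<Sum>k2\<in>{0..<K} - {k}.
        Cbar_mat A K P \<sigma>2 h k k1 k2 * complex_of_real (sqrt (P k1 * P k2) / \<sigma>2)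
          * h k1 r * gram A h k2 k)"

end

theory Submission
  imports Defs "Jordan_Normal_Form.Determinant"
begin


lemma meas_cnj[measurable]: "f \<in> borel_measurable M \<Longrightarrow> (\<lambda>x. cnj (f x)) \<in> borel_measurable M"
  by (rule borel_measurable_continuous_on[where f=cnj]) (auto intro: continuous_intros)

lemma L2_meas: "L2 A f \<Longrightarrow> f \<in> borel_measurable (lebesgue_on A)"
  by (simp add: L2_def)

lemma L2_int: "L2 A f \<Longrightarrow> integrable (lebesgue_on A) (\<lambda>r. (cmod (f r))\<^sup>2)"
  by (simp add: L2_def)

lemma L2_add: assumes "L2 A f" "L2 A g" shows "L2 A (\<lambda>r. f r + g r)"
proof -
  have m: "(\<lambda>r. f r + g r) \<in> borel_measurable (lebesgue_on A)"
    using L2_meas[OF assms(1)] L2_meas[OF assms(2)] by measurable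
  have "integrable (lebesgue_on A) (\<lambda>r. 2 * (cmod (f r))\<^sup>2 + 2 * (cmod (g r))\<^sup>2)"
    using assms by (simp add: L2_def)
  moreover have "(\<lambda>r. (cmod (f r + g r))\<^sup>2) \<in> borel_measurable (lebesgue_on A)"
    using m by measurable
  moreover have "AE r in lebesgue_on A. norm ((cmod (f r + g r))\<^sup>2) \<le> norm (2 * (cmod (f r))\<^sup>2 + 2 * (cmod (g r))\<^sup>2)"
  proof (rule AE_I2)
    fix r
    have "cmod (f r + g r) \<le> cmod (f r) + cmod (g r)" by (rule norm_triangle_ineq)
    hence "(cmod (f r + g r))\<^sup>2 \<le> (cmod (f r) + cmod (g r))\<^sup>2"
      by (simp add: power_mono)
    also have "\<dots> \<le> 2 * (cmod (f r))\<^sup>2 + 2 * (cmod (g r))\<^sup>2"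
      using zero_le_power2[of "cmod (f r) - cmod (g r)"] unfolding power2_diff power2_sum by linarith
    finally show "norm ((cmod (f r + g r))\<^sup>2) \<le> norm (2 * (cmod (f r))\<^sup>2 + 2 * (cmod (g r))\<^sup>2)"
      by simp
  qed
  ultimately have "integrable (lebesgue_on A) (\<lambda>r. (cmod (f r + g r))\<^sup>2)"
    by (rule Bochner_Integration.integrable_bound)
  thus ?thesis using m by (simp add: L2_def)
qed

lemma L2_cmult: assumes "L2 A f" shows "L2 A (\<lambda>r. c * f r)"
proof -
  have "integrable (lebesgue_on A) (\<lambda>r. (cmod c)\<^sup>2 * (cmod (f r))\<^sup>2)"
    using assms by (simp add: L2_def)
  moreover have "(\<lambda>r. c * f r) \<in> borel_measurable (lebesgue_on A)"
    using L2_meas[OF assms(1)] by measurable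
  ultimately show ?thesis by (simp add: L2_def norm_mult power_mult_distrib)
qed

lemma L2_sum: assumes "finite I" "\<And>i. i \<in> I \<Longrightarrow> L2 A (f i)"
  shows "L2 A (\<lambda>r. \<Sum>i\<in>I. f i r)"
  using assms
proof (induction I rule: finite_induct)
  case empty
  then show ?case by (simp add: L2_def)
next
  case (insert x F)
  then show ?case by (simp add: L2_add)
qed

lemma L2_diff: assumes "L2 A f" "L2 A g" shows "L2 A (\<lambda>r. f r - g r)"
  using L2_add[OF assms(1) L2_cmult[OF assms(2), of "-1"]] by simp

lemma ip_integrable: assumes "L2 A f" "L2 A g"
  shows "integrable (lebesgue_on A) (\<lambda>r. cnj (f r) * g r)"
proof -
  have "integrable (lebesgue_on A) (\<lambda>r. (cmod (f r))\<^sup>2 + (cmod (g r))\<^sup>2)"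
    using assms by (simp add: L2_def)
  moreover have "(\<lambda>r. cnj (f r) * g r) \<in> borel_measurable (lebesgue_on A)"
    using L2_meas[OF assms(1)] L2_meas[OF assms(2)] by measurable
  moreover have "AE r in lebesgue_on A. norm (cnj (f r) * g r) \<le> norm ((cmod (f r))\<^sup>2 + (cmod (g r))\<^sup>2)"
  proof (rule AE_I2)
    fix r
    have "cmod (f r) * cmod (g r) \<le> (cmod (f r))\<^sup>2 + (cmod (g r))\<^sup>2"
      by (smt (verit) norm_ge_zero power2_eq_square mult_left_mono mult_right_mono zero_le_square)
    thus "norm (cnj (f r) * g r) \<le> norm ((cmod (f r))\<^sup>2 + (cmod (g r))\<^sup>2)"
      by (simp add: norm_mult)
  qed
  ultimately show ?thesis by (rule Bochner_Integration.integrable_bound)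
qed



abbreviation nrm :: "(real^3) set \<Rightarrow> (real^3 \<Rightarrow> complex) \<Rightarrow> real" where
  "nrm A f \<equiv> integral\<^sup>L (lebesgue_on A) (\<lambda>r. (cmod (f r))\<^sup>2)"

lemma ip_add_right: assumes "L2 A f" "L2 A g1" "L2 A g2"
  shows "ip A f (\<lambda>r. g1 r + g2 r) = ip A f g1 + ip A f g2"
  unfolding ip_def using ip_integrable[OF assms(1,2)] ip_integrable[OF assms(1,3)]
  by (simp add: distrib_left)

lemma ip_cmult_right: "ip A f (\<lambda>r. c * g r) = c * ip A f g"
  unfolding ip_def by (simp add: mult.left_commute)

lemma ip_sum_right: assumes "finite I" "L2 A f" "\<And>i. i \<in> I \<Longrightarrow> L2 A (g i)"
  shows "ip A f (\<lambda>r. \<Sum>i\<in>I. g i r) = (\<Sum>i\<in>I. ip A f (g i))"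
  unfolding ip_def using assms ip_integrable[OF assms(2)]
  by (simp add: sum_distrib_left)

lemma ip_cnj: "ip A g f = cnj (ip A f g)"
  unfolding ip_def Bochner_Integration.integral_cnj[symmetric] by (simp add: mult.commute)

lemma ip_self: "ip A f f = complex_of_real (nrm A f)"
proof -
  have "\<And>r. cnj (f r) * f r = complex_of_real ((cmod (f r))\<^sup>2)"
    by (metis complex_norm_square mult.commute)
  thus ?thesis unfolding ip_def by (simp del: of_real_power)
qed

lemma nrm_nonneg: "nrm A f \<ge> 0"
  by (rule Bochner_Integration.integral_nonneg) simp

lemma amgm_alpha: fixes a b \<alpha> :: real assumes "\<alpha> > 0"
  shows "a * b \<le> (\<alpha> * a\<^sup>2 + b\<^sup>2 / \<alpha>) / 2"
proof -
  have "0 \<le> (\<alpha>*a-b)^2/\<alpha>" using assms by simp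
  also have "(\<alpha>*a-b)^2/\<alpha> = \<alpha> * a\<^sup>2 + b\<^sup>2 / \<alpha> - 2*a*b"
    using assms by (simp add: field_simps power2_eq_square)
  finally show ?thesis by simp
qed

lemma ip_bound: assumes "L2 A f" "L2 A g" "\<alpha> > 0"
  shows "cmod (ip A f g) \<le> (\<alpha> * nrm A f + nrm A g / \<alpha>) / 2"
proof -
  have i1: "integrable (lebesgue_on A) (\<lambda>r. cnj (f r) * g r)" by (rule ip_integrable[OF assms(1,2)])
  have i2: "integrable (lebesgue_on A) (\<lambda>r. (\<alpha> * (cmod (f r))\<^sup>2 + (cmod (g r))\<^sup>2 / \<alpha>) / 2)"
    using L2_int[OF assms(1)] L2_int[OF assms(2)] by simp
  have "cmod (ip A f g) \<le> integral\<^sup>L (lebesgue_on A) (\<lambda>r. norm (cnj (f r) * g r))"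
    unfolding ip_def by (rule integral_norm_bound)
  also have "\<dots> \<le> integral\<^sup>L (lebesgue_on A) (\<lambda>r. (\<alpha> * (cmod (f r))\<^sup>2 + (cmod (g r))\<^sup>2 / \<alpha>) / 2)"
  proof (rule integral_mono)
    show "integrable (lebesgue_on A) (\<lambda>r. norm (cnj (f r) * g r))" using i1 by simp
    show "integrable (lebesgue_on A) (\<lambda>r. (\<alpha> * (cmod (f r))\<^sup>2 + (cmod (g r))\<^sup>2 / \<alpha>) / 2)" by (rule i2)
    fix r show "norm (cnj (f r) * g r) \<le> (\<alpha> * (cmod (f r))\<^sup>2 + (cmod (g r))\<^sup>2 / \<alpha>) / 2"
      using amgm_alpha[OF assms(3), of "cmod (f r)" "cmod (g r)"] by (simp add: norm_mult)
  qed
  also have "\<dots> = (\<alpha> * nrm A f + nrm A g / \<alpha>) / 2"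
    using L2_int[OF assms(1)] L2_int[OF assms(2)] by simp
  finally show ?thesis .
qed


lemma ip_diff_right: assumes "L2 A f" "L2 A g1" "L2 A g2"
  shows "ip A f (\<lambda>r. g1 r - g2 r) = ip A f g1 - ip A f g2"
proof -
  have "ip A f (\<lambda>r. g1 r + (-1) * g2 r) = ip A f g1 + ip A f (\<lambda>r. (-1) * g2 r)"
    by (rule ip_add_right[OF assms(1,2) L2_cmult[OF assms(3)]])
  moreover have "ip A f (\<lambda>r. (-1) * g2 r) = (-1) * ip A f g2" by (rule ip_cmult_right)
  ultimately show ?thesis by simp
qed

lemma opt_alpha: fixes t X Y :: real
  assumes "t \<ge> 0" "X > 0" "Y > 0" "\<And>\<alpha>. \<alpha> > 0 \<Longrightarrow> t \<le> (\<alpha> * X + Y / \<alpha>) / 2"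
  shows "t\<^sup>2 \<le> X * Y"
proof -
  define \<alpha> where "\<alpha> = sqrt Y / sqrt X"
  have a: "\<alpha> > 0" using assms by (simp add: \<alpha>_def)
  have "\<alpha> * X = sqrt X * sqrt Y" using assms
    by (simp add: \<alpha>_def field_simps)
  moreover have "Y / \<alpha> = sqrt X * sqrt Y" using assms
    by (simp add: \<alpha>_def field_simps)
  ultimately have "t \<le> sqrt X * sqrt Y" using assms(4)[OF a] by simp
  hence "t\<^sup>2 \<le> (sqrt X * sqrt Y)\<^sup>2" using assms(1) by (simp add: power_mono)
  also have "\<dots> = X * Y" using assms by (simp add: power_mult_distrib)
  finally show ?thesis .
qed



lemma right_inverse_exists:
  fixes M :: "nat \<Rightarrow> nat \<Rightarrow> complex"
  assumes fin: "finite S"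
    and inj: "\<And>x. \<forall>i\<in>S. (\<Sum>j\<in>S. M i j * x j) = 0 \<Longrightarrow> \<forall>j\<in>S. x j = 0"
  shows "\<exists>B. (\<forall>i\<in>S. \<forall>l\<in>S. (\<Sum>j\<in>S. M i j * B j l) = (if i = l then 1 else 0))
                        \<and> (\<forall>i l. i \<notin> S \<or> l \<notin> S \<longrightarrow> B i l = 0)"
proof -
  define n where "n = card S"
  obtain f where bij: "bij_betw f {0..<n} S"
    using ex_bij_betw_nat_finite[OF fin] unfolding n_def by blast
  define g where "g = inv_into {0..<n} f"
  have gf: "\<And>a. a < n \<Longrightarrow> g (f a) = a"
    unfolding g_def using bij by (simp add: bij_betw_def inv_into_f_f)
  have fg: "\<And>j. j \<in> S \<Longrightarrow> f (g j) = j"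
    unfolding g_def using bij by (simp add: bij_betw_def f_inv_into_f)
  have gS: "\<And>j. j \<in> S \<Longrightarrow> g j < n"
    unfolding g_def using bij by (metis atLeastLessThan_iff bij_betw_def inv_into_into)
  have fS: "\<And>a. a < n \<Longrightarrow> f a \<in> S"
    using bij by (auto simp: bij_betw_def)
  have reidx: "\<And>F. (\<Sum>j\<in>S. F j) = (\<Sum>b\<in>{0..<n}. F (f b))"
    using sum.reindex_bij_betw[OF bij] by metis
  define Am where "Am = Matrix.mat n n (\<lambda>(i,j). M (f i) (f j))"
  have Am: "Am \<in> carrier_mat n n" unfolding Am_def by simp
  have "Determinant.det Am \<noteq> 0"
  proof
    assume "Determinant.det Am = 0"
    then obtain v where v: "v \<in> carrier_vec n" "v \<noteq> 0\<^sub>v n" "Am *\<^sub>v v = 0\<^sub>v n"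
      using det_0_iff_vec_prod_zero[OF Am] by blast
    define x where "x j = (if j \<in> S then vec_index v (g j) else 0)" for j
    have "\<forall>i\<in>S. (\<Sum>j\<in>S. M i j * x j) = 0"
    proof
      fix i assume i: "i \<in> S"
      have "(\<Sum>j\<in>S. M i j * x j) = (\<Sum>b\<in>{0..<n}. M i (f b) * x (f b))" by (rule reidx)
      also have "\<dots> = (\<Sum>b\<in>{0..<n}. M (f (g i)) (f b) * vec_index v b)"
        using fS gf fg i by (simp add: x_def)
      also have "\<dots> = vec_index (Am *\<^sub>v v) (g i)"
        using gS[OF i] v(1) by (simp add: Am_def scalar_prod_def)
      also have "\<dots> = 0" using v(3) gS[OF i] by simp
      finally show "(\<Sum>j\<in>S. M i j * x j) = 0" .
    qed
    hence "\<forall>j\<in>S. x j = 0" by (rule inj)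
    hence "\<And>b. b < n \<Longrightarrow> vec_index v b = 0"
    proof -
      fix b assume b: "b < n" and z: "\<forall>j\<in>S. x j = 0"
      have "x (f b) = 0" using z fS[OF b] by blast
      thus "vec_index v b = 0" using fS[OF b] gf[OF b] by (simp add: x_def)
    qed
    hence "v = 0\<^sub>v n" using v(1) by (intro eq_vecI) auto
    with v(2) show False by simp
  qed
  from det_non_zero_imp_unit[OF Am this, of "()"]
  obtain Bm where Bm: "Bm \<in> carrier_mat n n" "Am * Bm = 1\<^sub>m n"
    unfolding Units_def ring_mat_def by auto
  define B where "B j l = (if j \<in> S \<and> l \<in> S then Bm $$ (g j, g l) else 0)" for j l
  have "\<forall>i\<in>S. \<forall>l\<in>S. (\<Sum>j\<in>S. M i j * B j l) = (if i = l then 1 else 0)"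
  proof (intro ballI)
    fix i l assume i: "i \<in> S" and l: "l \<in> S"
    have "(\<Sum>j\<in>S. M i j * B j l) = (\<Sum>b\<in>{0..<n}. M i (f b) * B (f b) l)" by (rule reidx)
    also have "\<dots> = (\<Sum>b\<in>{0..<n}. Am $$ (g i, b) * Bm $$ (b, g l))"
      using fS gf fg i l gS by (simp add: B_def Am_def)
    also have "\<dots> = (Am * Bm) $$ (g i, g l)"
      using gS[OF i] gS[OF l] Bm(1) Am by (simp add: scalar_prod_def)
    also have "\<dots> = (if g i = g l then 1 else 0)"
      using Bm(2) gS[OF i] gS[OF l] by simp
    also have "\<dots> = (if i = l then 1 else 0)"
      using fg[OF i] fg[OF l] by metis
    finally show "(\<Sum>j\<in>S. M i j * B j l) = (if i = l then 1 else 0)" .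
  qed
  moreover have "\<forall>i l. i \<notin> S \<or> l \<notin> S \<longrightarrow> B i l = 0" by (simp add: B_def)
  ultimately show ?thesis by blast
qed

lemma mat_inv_on_spec:
  fixes M :: "nat \<Rightarrow> nat \<Rightarrow> complex"
  assumes fin: "finite S"
    and inj: "\<And>x. \<forall>i\<in>S. (\<Sum>j\<in>S. M i j * x j) = 0 \<Longrightarrow> \<forall>j\<in>S. x j = 0"
  shows "\<forall>i\<in>S. \<forall>l\<in>S. (\<Sum>j\<in>S. M i j * mat_inv_on S M j l) = (if i = l then 1 else 0)"
proof -
  let ?P = "\<lambda>B. (\<forall>i\<in>S. \<forall>l\<in>S. (\<Sum>j\<in>S. M i j * B j l) = (if i = l then 1 else 0))
                        \<and> (\<forall>i l. i \<notin> S \<or> l \<notin> S \<longrightarrow> B i l = 0)"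
  obtain B where B: "?P B" using right_inverse_exists[OF assms] by blast
  have uniq: "B' = B" if B': "?P B'" for B'
  proof (rule ext, rule ext)
    fix j l
    show "B' j l = B j l"
    proof (cases "l \<in> S")
      case True
      have "\<forall>i\<in>S. (\<Sum>j\<in>S. M i j * (B' j l - B j l)) = 0"
      proof
        fix i assume i: "i \<in> S"
        have "(\<Sum>j\<in>S. M i j * (B' j l - B j l)) = (\<Sum>j\<in>S. M i j * B' j l) - (\<Sum>j\<in>S. M i j * B j l)"
          by (simp add: right_diff_distrib sum_subtractf)
        also have "\<dots> = 0" using B B' i True by simp
        finally show "(\<Sum>j\<in>S. M i j * (B' j l - B j l)) = 0" .
      qed
      hence z: "\<forall>j\<in>S. B' j l - B j l = 0" by (rule inj)
      show ?thesis
      proof (cases "j \<in> S")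
        case True then show ?thesis using z by simp
      next
        case False then show ?thesis using conjunct2[OF B, rule_format, of j l] conjunct2[OF B', rule_format, of j l] by simp
      qed
    next
      case False then show ?thesis using conjunct2[OF B, rule_format, of j l] conjunct2[OF B', rule_format, of j l] by simp
    qed
  qed
  have "?P (mat_inv_on S M)"
    unfolding mat_inv_on_def by (rule theI[of ?P B]) (rule B, erule uniq)
  thus ?thesis by blast
qed



theorem theorem3:
  fixes A :: "(real^3) set" and K :: nat and P :: "nat \<Rightarrow> real" and \<sigma>2 :: real
    and h :: "nat \<Rightarrow> real^3 \<Rightarrow> complex" and k :: nat
  assumes "A \<in> sets lebesgue"
    and "K \<ge> 2"
    and "\<forall>i<K. P i > 0"
    and "\<sigma>2 > 0"
    and "\<forall>i<K. L2 A (h i)"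
    and "pos_def_mat K (gram A h)"
    and "k < K"
  shows "L2 A (w_mmse A K P \<sigma>2 h k)
       \<and> integral\<^sup>L (lebesgue_on A) (\<lambda>r. (cmod (w_mmse A K P \<sigma>2 h k r))\<^sup>2) \<noteq> 0
       \<and> (\<forall>w. L2 A w \<and> integral\<^sup>L (lebesgue_on A) (\<lambda>r. (cmod (w r))\<^sup>2) \<noteq> 0 \<longrightarrow>
             sinr A K P \<sigma>2 h k w \<le> sinr A K P \<sigma>2 h k (w_mmse A K P \<sigma>2 h k)
           \<and> rate A K P \<sigma>2 h k w \<le> rate A K P \<sigma>2 h k (w_mmse A K P \<sigma>2 h k))"
proof -
  define S where "S = {0..<K} - {k}"
  define p where "p i = P i / \<sigma>2" for i
  define s where "s i = sqrt (p i)" for i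
  define g where "g = gram A h"
  define M where "M = (\<lambda>i j. (if i = j then 1 else 0) + C_mat A K P \<sigma>2 h k i j)"
  define Cb where "Cb = Cbar_mat A K P \<sigma>2 h k"
  define u where "u = w_mmse A K P \<sigma>2 h k"
  have finS: "finite S" by (simp add: S_def)
  have SK: "\<And>i. i \<in> S \<Longrightarrow> i < K \<and> i \<noteq> k" by (simp add: S_def)
  have ppos: "\<And>i. i < K \<Longrightarrow> p i > 0" using assms(3,4) by (simp add: p_def)
  have spos: "\<And>i. i < K \<Longrightarrow> s i > 0" using ppos by (simp add: s_def)
  have ss: "\<And>i. i < K \<Longrightarrow> s i * s i = p i" using ppos by (simp add: s_def less_imp_le)
  have hL2: "\<And>i. i < K \<Longrightarrow> L2 A (h i)" using assms(5) by simp
  have Mdef: "\<And>i j. M i j = (if i = j then 1 else 0) + of_real (s i) * g i j * of_real (s j)"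
    by (simp add: M_def C_mat_def s_def p_def g_def)
  have Cb': "Cb = mat_inv_on S M" by (simp add: Cb_def Cbar_mat_def S_def M_def)
  have Mrow: "(\<Sum>j\<in>S. M i j * x j) = x i + of_real (s i) * (\<Sum>j\<in>S. g i j * (of_real (s j) * x j))"
    if i: "i \<in> S" for i x
  proof -
    have "(\<Sum>j\<in>S. M i j * x j) = (\<Sum>j\<in>S. (if i = j then x j else 0)) + (\<Sum>j\<in>S. of_real (s i) * (g i j * (of_real (s j) * x j)))"
    proof -
      have "\<And>j. M i j * x j = (if i = j then x j else 0) + of_real (s i) * (g i j * (of_real (s j) * x j))"
        by (simp add: Mdef algebra_simps)
      thus ?thesis by (simp add: sum.distrib)
    qed
    also have "\<dots> = x i + of_real (s i) * (\<Sum>j\<in>S. g i j * (of_real (s j) * x j))"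
      using i finS by (simp add: sum_distrib_left)
    finally show ?thesis .
  qed
  have inj: "\<forall>j\<in>S. x j = 0" if H: "\<forall>i\<in>S. (\<Sum>j\<in>S. M i j * x j) = 0" for x
  proof (rule ccontr)
    assume "\<not> (\<forall>j\<in>S. x j = 0)"
    then obtain j0 where j0: "j0 \<in> S" "x j0 \<noteq> 0" by blast
    define y where "y i = (if i \<in> S then of_real (s i) * x i else 0)" for i
    have y0: "\<exists>i<K. y i \<noteq> 0"
      using j0 SK[OF j0(1)] spos[of j0] by (auto simp: y_def)
    have Q: "Re (\<Sum>i<K. \<Sum>j<K. cnj (y i) * g i j * y j) > 0"
      using assms(6) y0 unfolding pos_def_mat_def g_def by blast
    have inner: "(\<Sum>j<K. cnj (y i) * g i j * y j) = (\<Sum>j\<in>S. cnj (y i) * g i j * y j)" for i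
      by (rule sum.mono_neutral_right) (auto simp: y_def S_def)
    have Qs: "(\<Sum>i<K. \<Sum>j<K. cnj (y i) * g i j * y j) = (\<Sum>i\<in>S. \<Sum>j\<in>S. cnj (y i) * g i j * y j)"
      unfolding inner by (rule sum.mono_neutral_right) (auto simp: y_def S_def)
    have "0 = (\<Sum>i\<in>S. cnj (x i) * (\<Sum>j\<in>S. M i j * x j))" using H by simp
    also have "\<dots> = (\<Sum>i\<in>S. cnj (x i) * x i + (\<Sum>j\<in>S. cnj (y i) * g i j * y j))"
    proof (rule sum.cong[OF refl])
      fix i assume i: "i \<in> S"
      have "cnj (x i) * (\<Sum>j\<in>S. M i j * x j) = cnj (x i) * x i + cnj (of_real (s i) * x i) * (\<Sum>j\<in>S. g i j * (of_real (s j) * x j))"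
        unfolding Mrow[OF i] by (simp add: distrib_left mult_ac)
      also have "\<dots> = cnj (x i) * x i + (\<Sum>j\<in>S. cnj (y i) * g i j * y j)"
        using i by (simp add: y_def sum_distrib_left mult_ac)
      finally show "cnj (x i) * (\<Sum>j\<in>S. M i j * x j) = cnj (x i) * x i + (\<Sum>j\<in>S. cnj (y i) * g i j * y j)" .
    qed
    also have "\<dots> = (\<Sum>i\<in>S. cnj (x i) * x i) + (\<Sum>i<K. \<Sum>j<K. cnj (y i) * g i j * y j)"
      unfolding Qs by (rule sum.distrib)
    finally have "Re 0 = (\<Sum>i\<in>S. Re (cnj (x i) * x i)) + Re (\<Sum>i<K. \<Sum>j<K. cnj (y i) * g i j * y j)"
      by (metis Re_sum plus_complex.sel(1))
    moreover have "(\<Sum>i\<in>S. Re (cnj (x i) * x i)) \<ge> 0"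
      by (rule sum_nonneg) (simp add: mult.commute complex_mult_cnj)
    ultimately show False using Q by simp
  qed
  have Cbinv: "\<forall>i\<in>S. \<forall>l\<in>S. (\<Sum>j\<in>S. M i j * Cb j l) = (if i = l then 1 else 0)"
    unfolding Cb' by (rule mat_inv_on_spec[OF finS inj]) blast
  define \<beta> where "\<beta> j = (\<Sum>k2\<in>S. Cb j k2 * complex_of_real (sqrt (P j * P k2) / \<sigma>2) * g k2 k)" for j
  have u_eq: "u r = h k r - (\<Sum>j\<in>S. \<beta> j * h j r)" for r
    unfolding u_def w_mmse_def Cb_def[symmetric] g_def[symmetric] S_def[symmetric]
  proof (rule arg_cong[where f="\<lambda>x. h k r - x"], rule sum.cong[OF refl])
    fix j assume "j \<in> S"
    show "(\<Sum>k2\<in>S. Cb j k2 * complex_of_real (sqrt (P j * P k2) / \<sigma>2) * h j r * g k2 k) = \<beta> j * h j r"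
      unfolding \<beta>_def sum_distrib_right by (rule sum.cong[OF refl]) (simp only: mult_ac)
  qed
  have sqPP: "sqrt (P j * P k2) / \<sigma>2 = s j * s k2" if "j < K" "k2 < K" for j k2
  proof -
    have "s j * s k2 = sqrt (P j * P k2 / (\<sigma>2 * \<sigma>2))"
      by (simp add: s_def p_def real_sqrt_mult[symmetric])
    also have "\<dots> = sqrt (P j * P k2) / \<sigma>2"
      using assms(4) by (simp add: real_sqrt_divide real_sqrt_mult)
    finally show ?thesis by simp
  qed
  define z where "z j = (\<Sum>k2\<in>S. Cb j k2 * (of_real (s k2) * g k2 k))" for j
  have \<beta>z: "\<beta> j = of_real (s j) * z j" if j: "j \<in> S" for j
    unfolding \<beta>_def z_def sum_distrib_left
  proof (rule sum.cong[OF refl])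
    fix k2 assume k2: "k2 \<in> S"
    show "Cb j k2 * complex_of_real (sqrt (P j * P k2) / \<sigma>2) * g k2 k =
          complex_of_real (s j) * (Cb j k2 * (complex_of_real (s k2) * g k2 k))"
      using sqPP[of j k2] SK[OF j] SK[OF k2] by (simp add: mult_ac)
  qed
  have Mz: "(\<Sum>j\<in>S. M i j * z j) = of_real (s i) * g i k" if i: "i \<in> S" for i
  proof -
    have "(\<Sum>j\<in>S. M i j * z j) = (\<Sum>j\<in>S. \<Sum>k2\<in>S. M i j * Cb j k2 * (of_real (s k2) * g k2 k))"
      by (simp add: z_def sum_distrib_left mult_ac)
    also have "\<dots> = (\<Sum>k2\<in>S. \<Sum>j\<in>S. M i j * Cb j k2 * (of_real (s k2) * g k2 k))"
      by (rule sum.swap)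
    also have "\<dots> = (\<Sum>k2\<in>S. (\<Sum>j\<in>S. M i j * Cb j k2) * (of_real (s k2) * g k2 k))"
      by (simp add: sum_distrib_right)
    also have "\<dots> = (\<Sum>k2\<in>S. (if i = k2 then 1 else 0) * (of_real (s k2) * g k2 k))"
      using Cbinv i by simp
    also have "\<dots> = (\<Sum>k2\<in>S. (if i = k2 then of_real (s k2) * g k2 k else 0))"
      by (rule sum.cong[OF refl]) simp
    also have "\<dots> = of_real (s i) * g i k" by (subst sum.delta'[OF finS]) (simp add: i)
    finally show ?thesis .
  qed
  define c where "c i = g i k - (\<Sum>j\<in>S. \<beta> j * g i j)" for i
  have \<beta>c: "\<beta> i = of_real (p i) * c i" if i: "i \<in> S" for i
  proof -
    have "(\<Sum>j\<in>S. g i j * (of_real (s j) * z j)) = (\<Sum>j\<in>S. \<beta> j * g i j)"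
      by (rule sum.cong[OF refl]) (simp add: \<beta>z mult_ac)
    hence "z i + of_real (s i) * (\<Sum>j\<in>S. \<beta> j * g i j) = of_real (s i) * g i k"
      using Mz[OF i] Mrow[OF i, of z] by simp
    hence "z i = of_real (s i) * c i" by (simp add: c_def algebra_simps)
    hence "\<beta> i = of_real (s i * s i) * c i" using \<beta>z[OF i] by simp
    thus ?thesis using ss SK[OF i] by simp
  qed
  have hL2S: "L2 A (h j)" if "j \<in> S" for j using hL2 SK that by blast
  have hk: "h k = (\<lambda>r. u r + (\<Sum>j\<in>S. \<beta> j * h j r))"
    by (rule ext) (simp add: u_eq)
  have uS: "u = (\<lambda>r. h k r - (\<Sum>j\<in>S. \<beta> j * h j r))"
    by (rule ext) (simp add: u_eq)
  have sumL2: "L2 A (\<lambda>r. \<Sum>j\<in>S. \<beta> j * h j r)"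
    by (rule L2_sum[OF finS]) (rule L2_cmult[OF hL2S])
  have uL2: "L2 A u"
    unfolding uS by (rule L2_diff[OF hL2[OF assms(7)] sumL2])
  have ipsum: "ip A f (\<lambda>r. \<Sum>j\<in>S. \<beta> j * h j r) = (\<Sum>j\<in>S. \<beta> j * ip A f (h j))" if f: "L2 A f" for f
    by (subst ip_sum_right[OF finS f]) (auto intro: L2_cmult[OF hL2S] simp: ip_cmult_right)
  have ip_h_u: "ip A (h i) u = c i" if i: "i < K" for i
  proof -
    have "ip A (h i) u = ip A (h i) (h k) - ip A (h i) (\<lambda>r. \<Sum>j\<in>S. \<beta> j * h j r)"
      unfolding uS by (rule ip_diff_right[OF hL2[OF i] hL2[OF assms(7)] sumL2])
    also have "\<dots> = c i" unfolding ipsum[OF hL2[OF i]] by (simp add: c_def g_def gram_def mult_ac)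
    finally show ?thesis .
  qed
  have keyw: "ip A w (h k) = ip A w u + (\<Sum>i\<in>S. of_real (p i) * c i * ip A w (h i))" if w: "L2 A w" for w
  proof -
    from hk have "ip A w (h k) = ip A w (\<lambda>r. u r + (\<Sum>j\<in>S. \<beta> j * h j r))" by (rule arg_cong)
    also have "\<dots> = ip A w u + ip A w (\<lambda>r. \<Sum>j\<in>S. \<beta> j * h j r)"
      by (rule ip_add_right[OF w uL2 sumL2])
    also have "\<dots> = ip A w u + (\<Sum>i\<in>S. of_real (p i) * c i * ip A w (h i))"
      unfolding ipsum[OF w] by (simp add: \<beta>c)
    finally show ?thesis .
  qed
  define x where "x i = (if i = k then 1 else if i \<in> S then - \<beta> i else 0)" for i
  have KS: "{..<K} = insert k S" using assms(7) by (auto simp: S_def)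
  have kS: "k \<notin> S" by (simp add: S_def)
  have u_sum: "u r = (\<Sum>i<K. x i * h i r)" for r
  proof -
    have "(\<Sum>i<K. x i * h i r) = x k * h k r + (\<Sum>i\<in>S. x i * h i r)"
      unfolding KS using finS kS by simp
    also have "(\<Sum>i\<in>S. x i * h i r) = (\<Sum>i\<in>S. - (\<beta> i * h i r))"
      by (rule sum.cong[OF refl]) (simp add: x_def SK)
    finally show ?thesis by (simp add: u_eq x_def sum_negf)
  qed
  have uK: "u = (\<lambda>r. \<Sum>i<K. x i * h i r)" by (rule ext) (rule u_sum)
  have ipK: "ip A f (\<lambda>r. \<Sum>i<K. x i * h i r) = (\<Sum>i<K. x i * ip A f (h i))" if f: "L2 A f" for f
    by (subst ip_sum_right[OF _ f]) (auto intro: L2_cmult[OF hL2] simp: ip_cmult_right)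
  have ip_u_hj: "ip A u (h j) = (\<Sum>i<K. cnj (x i) * g i j)" if j: "j < K" for j
  proof -
    have "ip A u (h j) = cnj (ip A (h j) u)" by (rule ip_cnj)
    also have "\<dots> = cnj (\<Sum>i<K. x i * ip A (h j) (h i))" unfolding uK ipK[OF hL2[OF j]] ..
    also have "\<dots> = (\<Sum>i<K. cnj (x i) * g i j)"
      by (simp add: g_def gram_def ip_cnj[of A "h j" "h _"])
    finally show ?thesis .
  qed
  have "ip A u u = (\<Sum>j<K. x j * ip A u (h j))" unfolding uK[symmetric] using ipK[OF uL2] uK by simp
  also have "\<dots> = (\<Sum>j<K. \<Sum>i<K. cnj (x i) * g i j * x j)"
    by (simp add: ip_u_hj sum_distrib_left mult_ac)
  also have "\<dots> = (\<Sum>i<K. \<Sum>j<K. cnj (x i) * g i j * x j)" by (rule sum.swap)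
  finally have ipuu: "ip A u u = (\<Sum>i<K. \<Sum>j<K. cnj (x i) * g i j * x j)" .
  have "\<exists>i<K. x i \<noteq> 0" using assms(7) by (auto simp: x_def intro!: exI[of _ k])
  hence "Re (\<Sum>i<K. \<Sum>j<K. cnj (x i) * g i j * x j) > 0"
    using assms(6) unfolding pos_def_mat_def g_def by blast
  hence "Re (ip A u u) > 0" by (subst ipuu)
  hence nu: "nrm A u > 0" by (simp add: ip_self)
  define Y where "Y = nrm A u + (\<Sum>i\<in>S. p i * (cmod (c i))\<^sup>2)"
  have "0 \<le> (\<Sum>i\<in>S. p i * (cmod (c i))\<^sup>2)"
  proof (rule sum_nonneg)
    fix i assume "i \<in> S"
    hence "p i > 0" using SK ppos by blast
    thus "0 \<le> p i * (cmod (c i))\<^sup>2" by simp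
  qed
  hence Ypos: "Y > 0" unfolding Y_def using nu by linarith
  have ip_u_h: "ip A u (h i) = cnj (c i)" if "i < K" for i
    using ip_h_u[OF that] ip_cnj[of A u "h i"] by simp
  have akU: "ip A u (h k) = of_real Y"
  proof -
    have "ip A u (h k) = ip A u u + (\<Sum>i\<in>S. of_real (p i) * c i * cnj (c i))"
      using keyw[OF uL2] ip_u_h SK by simp
    also have "\<dots> = of_real Y"
      unfolding Y_def ip_self by (simp add: mult.assoc complex_norm_square[symmetric] del: of_real_power)
    finally show ?thesis .
  qed
  have sinrU: "sinr A K P \<sigma>2 h k u = p k * Y"
  proof -
    have den: "(\<Sum>k'\<in>{0..<K} - {k}. (P k' / \<sigma>2) * (cmod (ip A u (h k')))\<^sup>2) + nrm A u = Y"
      unfolding S_def[symmetric] Y_def using ip_u_h SK by (simp add: p_def)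
    have "sinr A K P \<sigma>2 h k u = p k * Y\<^sup>2 / Y"
      unfolding sinr_def den akU using Ypos by (simp add: p_def)
    thus ?thesis using Ypos by (simp add: power2_eq_square)
  qed
  have sinr_le: "sinr A K P \<sigma>2 h k w \<le> p k * Y" and sinr_nn: "0 \<le> sinr A K P \<sigma>2 h k w"
    if w: "L2 A w" and nw: "nrm A w \<noteq> 0" for w
  proof -
    define a where "a i = ip A w (h i)" for i
    define X where "X = (\<Sum>i\<in>S. p i * (cmod (a i))\<^sup>2) + nrm A w"
    have nwp: "nrm A w > 0" using nw nrm_nonneg[of A w] by linarith
    have "0 \<le> (\<Sum>i\<in>S. p i * (cmod (a i))\<^sup>2)"
    proof (rule sum_nonneg)
      fix i assume "i \<in> S"
      hence "p i > 0" using SK ppos by blast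
      thus "0 \<le> p i * (cmod (a i))\<^sup>2" by simp
    qed
    hence Xpos: "X > 0" unfolding X_def using nwp by linarith
    have sinrw: "sinr A K P \<sigma>2 h k w = p k * (cmod (a k))\<^sup>2 / X"
      unfolding sinr_def X_def a_def S_def p_def by simp
    have bnd: "cmod (a k) \<le> (\<alpha> * X + Y / \<alpha>) / 2" if al: "\<alpha> > 0" for \<alpha>
    proof -
      have "cmod (a k) \<le> cmod (ip A w u) + cmod (\<Sum>i\<in>S. of_real (p i) * c i * a i)"
        unfolding a_def keyw[OF w] by (rule norm_triangle_ineq)
      also have "cmod (\<Sum>i\<in>S. of_real (p i) * c i * a i) \<le> (\<Sum>i\<in>S. p i * (cmod (a i) * cmod (c i)))"
        by (rule order_trans[OF norm_sum]) (auto intro!: sum_mono simp: norm_mult less_imp_le[OF ppos] SK mult_ac)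
      also have "\<dots> \<le> (\<Sum>i\<in>S. p i * ((\<alpha> * (cmod (a i))\<^sup>2 + (cmod (c i))\<^sup>2 / \<alpha>) / 2))"
      proof (rule sum_mono)
        fix i assume "i \<in> S"
        hence "p i > 0" using SK ppos by blast
        thus "p i * (cmod (a i) * cmod (c i)) \<le> p i * ((\<alpha> * (cmod (a i))\<^sup>2 + (cmod (c i))\<^sup>2 / \<alpha>) / 2)"
          by (intro mult_left_mono amgm_alpha al) auto
      qed
      also have "cmod (ip A w u) \<le> (\<alpha> * nrm A w + nrm A u / \<alpha>) / 2" by (rule ip_bound[OF w uL2 al])
      finally have "cmod (a k) \<le> (\<alpha> * nrm A w + nrm A u / \<alpha>) / 2 + (\<Sum>i\<in>S. p i * ((\<alpha> * (cmod (a i))\<^sup>2 + (cmod (c i))\<^sup>2 / \<alpha>) / 2))"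
        by simp
      also have "(\<Sum>i\<in>S. p i * ((\<alpha> * (cmod (a i))\<^sup>2 + (cmod (c i))\<^sup>2 / \<alpha>) / 2))
          = (\<Sum>i\<in>S. \<alpha> / 2 * (p i * (cmod (a i))\<^sup>2) + 1 / (2 * \<alpha>) * (p i * (cmod (c i))\<^sup>2))"
        by (rule sum.cong[OF refl]) (use al in \<open>simp add: field_simps\<close>)
      also have "\<dots> = \<alpha> / 2 * (\<Sum>i\<in>S. p i * (cmod (a i))\<^sup>2) + 1 / (2 * \<alpha>) * (\<Sum>i\<in>S. p i * (cmod (c i))\<^sup>2)"
        by (simp add: sum.distrib sum_distrib_left)
      also have "(\<alpha> * nrm A w + nrm A u / \<alpha>) / 2 + (\<alpha> / 2 * (\<Sum>i\<in>S. p i * (cmod (a i))\<^sup>2) + 1 / (2 * \<alpha>) * (\<Sum>i\<in>S. p i * (cmod (c i))\<^sup>2))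
           = (\<alpha> * X + Y / \<alpha>) / 2"
      proof -
        have gen: "(\<alpha> * nw + nu / \<alpha>) / 2 + (\<alpha> / 2 * SA + 1 / (2 * \<alpha>) * SC) = (\<alpha> * (SA + nw) + (nu + SC) / \<alpha>) / 2"
          for nw nu SA SC :: real using al by (simp add: field_simps)
        show ?thesis unfolding X_def Y_def by (rule gen)
      qed
      finally show ?thesis .
    qed
    have "(cmod (a k))\<^sup>2 \<le> X * Y" by (rule opt_alpha[OF norm_ge_zero Xpos Ypos bnd])
    hence "p k * (cmod (a k))\<^sup>2 / X \<le> p k * (X * Y) / X"
      using Xpos ppos[OF assms(7)] by (intro divide_right_mono mult_left_mono) auto
    thus "sinr A K P \<sigma>2 h k w \<le> p k * Y" unfolding sinrw using Xpos by simp
    show "0 \<le> sinr A K P \<sigma>2 h k w" unfolding sinrw using Xpos ppos[OF assms(7)] by simp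
  qed
  show ?thesis
  proof (intro conjI allI impI)
    show "L2 A (w_mmse A K P \<sigma>2 h k)" using uL2 by (simp add: u_def)
    show "nrm A (w_mmse A K P \<sigma>2 h k) \<noteq> 0" using nu by (simp add: u_def)
  next
    fix w assume H: "L2 A w \<and> nrm A w \<noteq> 0"
    show "sinr A K P \<sigma>2 h k w \<le> sinr A K P \<sigma>2 h k (w_mmse A K P \<sigma>2 h k)"
      using sinr_le[of w] H sinrU by (simp add: u_def)
    show "rate A K P \<sigma>2 h k w \<le> rate A K P \<sigma>2 h k (w_mmse A K P \<sigma>2 h k)"
      unfolding rate_def using sinr_le[of w] sinr_nn[of w] H sinrU
      by (intro log_mono) (auto simp: u_def)
  qed
qed

end
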